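(* Let $K\in\{\mathbb R,\mathbb C,\mathbb H\}$ and let $(E,d)$ be a metric vector space over $K$ such that $d$ is $C_0$-translation invariant and $(C_1,C_2,C_3)$-lipschitz multiplicative. Let $d_0(x,y)=\int_{\mathbb U}d(ux,uy)\,d\mu(u)$, $\delta(x,y)=\lim_{n\to\infty}\frac1n d(nx,ny)$ and $\delta_0(x,y)=\lim_{n\to\infty}\frac1n d_0(nx,ny)$. Then for all $x,y\in E$, $$\delta_0(x,y)=\int_{\mathbb U}\delta(ux,uy)\,d\mu(u).$$
   Context: A metric vector space is a topological vector space over $K$ whose topology is generated by the metric $d$. $\mathbb U=\{u\in K:|u|=1\}$, $\mu$ the right-invariant Haar probability measure on $\mathbb U$. $d$ is $C_0$-translation invariant if $d(x+z,y+z)\le d(x,y)+C_0$ for all $x,y,z$. $(C_1,C_2,C_3)$-lipschitz multiplicative ($C_1\ge1$, $C_2,C_3\ge0$) means $C_1^{-1}|\lambda|d(x,y)-C_2|\lambda|-C_3\le d(\lambda x,\lambda y)\le C_1|\lambda|d(x,y)+C_2|\lambda|+C_3$ for all $\lambda\in K$, $x,y\in E$. (Under these hypotheses the limits defining $\delta,\delta_0$ exist.) *)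

theory Defs
  imports "HOL-Analysis.Analysis" "HOL-Probability.Probability"
begin

text \<open>The scalar field K is modelled as a type of class real_normed_div_algebra:
an associative real division algebra with multiplicative norm. By the
Urbanik--Wright / Frobenius theorem these are exactly R, C and H.\<close>

definition unit_sphere :: "'k::real_normed_div_algebra set" where
  "unit_sphere = {u. norm u = 1}"

definition right_haar_prob :: "'k::real_normed_div_algebra measure \<Rightarrow> bool" where
  "right_haar_prob \<mu> \<longleftrightarrow>
     prob_space \<mu> \<and> space \<mu> = unit_sphere \<and>
     sets \<mu> = sets (restrict_space borel unit_sphere) \<and>
     (\<forall>u\<in>unit_sphere. \<forall>A\<in>sets \<mu>. emeasure \<mu> ((\<lambda>v. v * u) ` A) = emeasure \<mu> A)"

definition left_vector_space :: "('k::real_normed_div_algebra \<Rightarrow> 'e::ab_group_add \<Rightarrow> 'e) \<Rightarrow> bool" where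
  "left_vector_space sc \<longleftrightarrow>
     (\<forall>a x y. sc a (x + y) = sc a x + sc a y) \<and>
     (\<forall>a b x. sc (a + b) x = sc a x + sc b x) \<and>
     (\<forall>a b x. sc a (sc b x) = sc (a * b) x) \<and>
     (\<forall>x. sc 1 x = x)"

definition metric_vector_space :: "('k::real_normed_div_algebra \<Rightarrow> 'e::ab_group_add \<Rightarrow> 'e) \<Rightarrow> ('e \<Rightarrow> 'e \<Rightarrow> real) \<Rightarrow> bool" where
  "metric_vector_space sc d \<longleftrightarrow>
     left_vector_space sc \<and> Metric_space UNIV d \<and>
     continuous_map (prod_topology (Metric_space.mtopology UNIV d) (Metric_space.mtopology UNIV d))
        (Metric_space.mtopology UNIV d) (\<lambda>(x, y). x + y) \<and>
     continuous_map (prod_topology euclidean (Metric_space.mtopology UNIV d))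
        (Metric_space.mtopology UNIV d) (\<lambda>(a, x). sc a x)"

definition translation_invariant_C :: "real \<Rightarrow> ('e::ab_group_add \<Rightarrow> 'e \<Rightarrow> real) \<Rightarrow> bool" where
  "translation_invariant_C C0 d \<longleftrightarrow> (\<forall>x y z. d (x + z) (y + z) \<le> d x y + C0)"

definition lipschitz_multiplicative ::
  "real \<Rightarrow> real \<Rightarrow> real \<Rightarrow> ('k::real_normed_div_algebra \<Rightarrow> 'e \<Rightarrow> 'e) \<Rightarrow> ('e \<Rightarrow> 'e \<Rightarrow> real) \<Rightarrow> bool" where
  "lipschitz_multiplicative C1 C2 C3 sc d \<longleftrightarrow>
     C1 \<ge> 1 \<and> C2 \<ge> 0 \<and> C3 \<ge> 0 \<and>
     (\<forall>c x y. d (sc c x) (sc c y) \<ge> norm c * d x y / C1 - C2 * norm c - C3 \<and>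
               d (sc c x) (sc c y) \<le> C1 * norm c * d x y + C2 * norm c + C3)"

definition d0 :: "'k::real_normed_div_algebra measure \<Rightarrow> ('k \<Rightarrow> 'e \<Rightarrow> 'e) \<Rightarrow> ('e \<Rightarrow> 'e \<Rightarrow> real) \<Rightarrow> 'e \<Rightarrow> 'e \<Rightarrow> real" where
  "d0 \<mu> sc d x y = (\<integral>u. d (sc u x) (sc u y) \<partial>\<mu>)"

definition asymp :: "('k::real_normed_div_algebra \<Rightarrow> 'e \<Rightarrow> 'e) \<Rightarrow> ('e \<Rightarrow> 'e \<Rightarrow> real) \<Rightarrow> 'e \<Rightarrow> 'e \<Rightarrow> real" where
  "asymp sc D x y = lim (\<lambda>n::nat. D (sc (of_nat n) x) (sc (of_nat n) y) / real n)"

end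

theory Submission
  imports Defs
begin

lemma fekete_nonneg:
  fixes a :: "nat \<Rightarrow> real"
  assumes sub: "\<And>m n. a (m + n) \<le> a m + a n" and nn: "\<And>n. a n \<ge> 0"
  shows "convergent (\<lambda>n. a n / real n)"
proof -
  define S where "S = (\<lambda>n. a n / real n) ` {1..}"
  define L where "L = Inf S"
  have bdd: "bdd_below S" unfolding S_def by (rule bdd_belowI[of _ 0]) (auto simp: nn)
  have Sne: "S \<noteq> {}" unfolding S_def by auto
  have Lle: "L \<le> a n / real n" if "n \<ge> 1" for n
    unfolding L_def using that bdd by (auto intro!: cInf_lower simp: S_def)
  have mult: "a (q * m) \<le> real q * a m + a 0" for q m
  proof (induction q)
    case 0 then show ?case by simp
  next
    case (Suc q)
    have "a (Suc q * m) = a (q * m + m)" by (simp add: add.commute)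
    also have "\<dots> \<le> a (q * m) + a m" by (rule sub)
    also have "\<dots> \<le> real (Suc q) * a m + a 0" using Suc by (simp add: algebra_simps)
    finally show ?case .
  qed
  have split: "a n \<le> real (n div m) * a m + ((\<Sum>r<m. a r) + a 0)" if "m > 0" for n m
  proof -
    have "a n = a ((n div m) * m + n mod m)" by simp
    also have "\<dots> \<le> a ((n div m) * m) + a (n mod m)" by (rule sub)
    also have "a (n mod m) \<le> (\<Sum>r<m. a r)"
      using that by (intro member_le_sum) (auto simp: nn)
    finally show ?thesis using mult[of "n div m" m] by simp
  qed
  have "(\<lambda>n. a n / real n) \<longlonglongrightarrow> L"
  proof (rule LIMSEQ_I)
    fix r :: real assume r: "r > 0"
    have "L < L + r / 2" using r by simp
    then obtain s where "s \<in> S" "s < L + r / 2"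
      using cInf_lessD[OF Sne] unfolding L_def by blast
    then obtain m where m: "m \<ge> 1" "a m / real m < L + r / 2" unfolding S_def by auto
    define B where "B = (\<Sum>r<m. a r) + a 0"
    have B0: "B \<ge> 0" unfolding B_def using nn by (simp add: sum_nonneg)
    define N where "N = nat \<lceil>2 * B / r\<rceil> + 1"
    show "\<exists>no. \<forall>n\<ge>no. norm (a n / real n - L) < r"
    proof (intro exI allI impI)
      fix n assume n: "N \<le> n"
      have n1: "n \<ge> 1" using n N_def by simp
      have "2 * B / r < real n" using n unfolding N_def by linarith
      then have "2 * B < r * real n" using r by (simp add: field_simps)
      then have Bn: "B / real n < r / 2" using n1 by (simp add: field_simps)
      have "a n / real n \<le> (real (n div m) * a m + B) / real n"
        using split[of m n] m n1 by (intro divide_right_mono) (auto simp: B_def)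
      also have "\<dots> = real (n div m) * a m / real n + B / real n" by (simp add: add_divide_distrib)
      also have "real (n div m) * a m / real n \<le> a m / real m"
      proof -
        have "real (n div m) * real m \<le> real n"
          by (metis of_nat_le_iff of_nat_mult div_times_less_eq_dividend)
        then have "real (n div m) * real m * a m \<le> real n * a m"
          by (intro mult_right_mono) (auto simp: nn)
        then show ?thesis using m n1 by (simp add: field_simps)
      qed
      finally have "a n / real n < L + r" using m Bn by linarith
      moreover have "L \<le> a n / real n" using Lle n1 by simp
      ultimately show "norm (a n / real n - L) < r" by simp
    qed
  qed
  then show ?thesis by (rule convergentI)
qed

theorem proposition3:
  fixes sc :: "'k::real_normed_div_algebra \<Rightarrow> 'e::ab_group_add \<Rightarrow> 'e"
    and d :: "'e \<Rightarrow> 'e \<Rightarrow> real"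
    and \<mu> :: "'k measure"
    and C0 C1 C2 C3 :: real
  assumes "metric_vector_space sc d"
    and "translation_invariant_C C0 d"
    and "lipschitz_multiplicative C1 C2 C3 sc d"
    and "right_haar_prob \<mu>"
  shows "\<forall>x y. asymp sc (d0 \<mu> sc d) x y = (\<integral>u. asymp sc d (sc u x) (sc u y) \<partial>\<mu>)"
proof -
  have lvs: "left_vector_space sc" and ms: "Metric_space UNIV d"
    and cont: "continuous_map (prod_topology euclidean (Metric_space.mtopology UNIV d))
        (Metric_space.mtopology UNIV d) (\<lambda>(a, x). sc a x)"
    using assms(1) unfolding metric_vector_space_def by auto
  have ti: "\<And>x y z. d (x + z) (y + z) \<le> d x y + C0"
    using assms(2) unfolding translation_invariant_C_def by auto
  have lm: "C1 \<ge> 1" "C2 \<ge> 0" "C3 \<ge> 0"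
    "\<And>c x y. d (sc c x) (sc c y) \<le> C1 * norm c * d x y + C2 * norm c + C3"
    using assms(3) unfolding lipschitz_multiplicative_def by auto
  have hp: "prob_space \<mu>" "space \<mu> = unit_sphere" "sets \<mu> = sets (restrict_space borel unit_sphere)"
    using assms(4) unfolding right_haar_prob_def by auto
  interpret P: prob_space \<mu> by (rule hp(1))
  have dnn: "\<And>x y. d x y \<ge> 0" using Metric_space.nonneg[OF ms] by blast
  have dtri: "\<And>x y z. d x z \<le> d x y + d y z" using Metric_space.triangle[OF ms] by blast
  have dzero: "\<And>x. d x x = 0" using Metric_space.zero[OF ms] by blast
  have C0: "C0 \<ge> 0" using ti[of 0 0 0] by simp
  have add_sc: "\<And>a b x. sc (a + b) x = sc a x + sc b x"
    and assoc: "\<And>a b x. sc a (sc b x) = sc (a * b) x" and one: "\<And>x. sc 1 x = x"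
    using lvs unfolding left_vector_space_def by auto
  have sc0: "\<And>x. sc 0 x = 0"
  proof -
    fix x have "sc (0 + 0) x = sc 0 x + sc 0 x" by (rule add_sc)
    then show "sc 0 x = 0" by simp
  qed
  have subadd: "d (sc (of_nat (m + n)) x) (sc (of_nat (m + n)) y)
      \<le> d (sc (of_nat m) x) (sc (of_nat m) y) + d (sc (of_nat n) x) (sc (of_nat n) y) + 2 * C0"
    for m n x y
  proof -
    let ?mx = "sc (of_nat m) x" and ?my = "sc (of_nat m) y"
    let ?nx = "sc (of_nat n) x" and ?ny = "sc (of_nat n) y"
    have e1: "sc (of_nat (m + n)) x = ?mx + ?nx" by (simp add: add_sc)
    have e2: "sc (of_nat (m + n)) y = ?my + ?ny" by (simp add: add_sc)
    have "d (?mx + ?nx) (?my + ?ny) \<le> d (?mx + ?nx) (?my + ?nx) + d (?my + ?nx) (?my + ?ny)"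
      by (rule dtri)
    also have "d (?mx + ?nx) (?my + ?nx) \<le> d ?mx ?my + C0" by (rule ti)
    also have "d (?my + ?nx) (?my + ?ny) = d (?nx + ?my) (?ny + ?my)" by (simp add: add.commute)
    also have "\<dots> \<le> d ?nx ?ny + C0" by (rule ti)
    finally show ?thesis unfolding e1 e2 by simp
  qed
  have conv: "convergent (\<lambda>n. d (sc (of_nat n) x) (sc (of_nat n) y) / real n)" for x y
  proof -
    define a where "a n = d (sc (of_nat n) x) (sc (of_nat n) y) + 2 * C0" for n
    have "convergent (\<lambda>n. a n / real n)"
    proof (rule fekete_nonneg)
      fix m n show "a (m + n) \<le> a m + a n" using subadd[of m n x y] by (simp add: a_def)
    next
      fix n show "0 \<le> a n" using dnn C0 by (simp add: a_def)
    qed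
    then obtain L where L: "(\<lambda>n. a n / real n) \<longlonglongrightarrow> L" by (auto simp: convergent_def)
    have "(\<lambda>n. 2 * C0 / real n) \<longlonglongrightarrow> 0"
      by (intro tendsto_divide_0[OF tendsto_const] filterlim_at_top_imp_at_infinity filterlim_real_sequentially)
    from tendsto_diff[OF L this] have "(\<lambda>n. a n / real n - 2 * C0 / real n) \<longlonglongrightarrow> L" by simp
    moreover have "(\<lambda>n. a n / real n - 2 * C0 / real n) = (\<lambda>n. d (sc (of_nat n) x) (sc (of_nat n) y) / real n)"
      by (auto simp: a_def diff_divide_distrib[symmetric])
    ultimately show ?thesis by (auto simp: convergent_def)
  qed
  have linb: "d (sc (of_nat n) x) (sc (of_nat n) y) \<le> real n * (d x y + 2 * C0)" for n x y
  proof (induction n)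
    case 0 then show ?case by (simp add: sc0 dzero)
  next
    case (Suc n)
    have e: "\<And>z. sc (of_nat 1) z = z" using one by simp
    have "d (sc (of_nat (n + 1)) x) (sc (of_nat (n + 1)) y)
        \<le> d (sc (of_nat n) x) (sc (of_nat n) y) + d (sc (of_nat 1) x) (sc (of_nat 1) y) + 2 * C0"
      by (rule subadd)
    then have "d (sc (of_nat (n + 1)) x) (sc (of_nat (n + 1)) y)
        \<le> d (sc (of_nat n) x) (sc (of_nat n) y) + (d x y + 2 * C0)"
      unfolding e by linarith
    then have "d (sc (of_nat (Suc n)) x) (sc (of_nat (Suc n)) y)
        \<le> d (sc (of_nat n) x) (sc (of_nat n) y) + (d x y + 2 * C0)"
      by (metis Suc_eq_plus1)
    moreover have "real (Suc n) * (d x y + 2 * C0) = real n * (d x y + 2 * C0) + (d x y + 2 * C0)"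
      by (simp add: distrib_right)
    ultimately show ?case using Suc by linarith
  qed
  have meas: "(\<lambda>u. d (sc u a) (sc u b)) \<in> borel_measurable \<mu>" for a b
  proof -
    let ?T = "Metric_space.mtopology UNIV d"
    have top: "topspace ?T = UNIV" using Metric_space.topspace_mtopology[OF ms] by blast
    have ca: "continuous_map euclidean ?T (\<lambda>u. sc u c)" for c
    proof -
      have "continuous_map euclidean (prod_topology euclidean ?T) (\<lambda>u. (u, c))"
        by (intro continuous_map_pairedI continuous_map_id[unfolded id_def] continuous_map_const[THEN iffD2]) (simp add: top)
      from continuous_map_compose[OF this cont] show ?thesis by (simp add: o_def)
    qed
    have mt: "mtopology_of (metric (UNIV, d)) = ?T" using ms by (rule Metric_space.mtopology_of)
    have md: "mdist (metric (UNIV, d)) = d" using ms by (rule Metric_space.mdist_metric)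
    have "continuous_map euclidean euclidean (\<lambda>u. mdist (metric (UNIV, d)) (sc u a) (sc u b))"
      by (rule continuous_map_mdist) (use ca mt in auto)
    then have "continuous_on UNIV (\<lambda>u. d (sc u a) (sc u b))"
      by (simp add: md continuous_map_iff_continuous2)
    then have "(\<lambda>u. d (sc u a) (sc u b)) \<in> borel_measurable borel"
      by (rule borel_measurable_continuous_onI)
    then have "(\<lambda>u. d (sc u a) (sc u b)) \<in> borel_measurable (restrict_space borel unit_sphere)"
      by (rule measurable_restrict_space1)
    then show ?thesis unfolding measurable_cong_sets[OF hp(3) refl] .
  qed
  show ?thesis
  proof (intro allI)
    fix x y
    define s where "s n u = d (sc (of_nat n) (sc u x)) (sc (of_nat n) (sc u y)) / real n" for n u
    define f where "f u = asymp sc d (sc u x) (sc u y)" for u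
    have comm: "sc (of_nat n) (sc u z) = sc u (sc (of_nat n) z)" for n u z
      by (simp add: assoc mult_of_nat_commute)
    have lim: "(\<lambda>n. s n u) \<longlonglongrightarrow> f u" for u
      unfolding s_def f_def asymp_def using conv by (simp add: convergent_LIMSEQ_iff)
    have sm: "s n \<in> borel_measurable \<mu>" for n
      unfolding s_def comm by (intro borel_measurable_divide meas borel_measurable_const)
    have fm: "f \<in> borel_measurable \<mu>"
      by (rule borel_measurable_LIMSEQ_real[OF lim sm])
    define W where "W = C1 * d x y + C2 + C3 + 2 * C0"
    have bound: "AE u in \<mu>. norm (s n u) \<le> W" for n
    proof (rule AE_I2)
      fix u assume "u \<in> space \<mu>"
      then have nu: "norm u = 1" using hp(2) by (simp add: unit_sphere_def)
      have b1: "d (sc u x) (sc u y) \<le> C1 * d x y + C2 + C3" using lm(4)[of u x y] nu by simp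
      have W0: "W \<ge> 0" unfolding W_def using lm dnn[of x y] C0 by simp
      show "norm (s n u) \<le> W"
      proof (cases "n = 0")
        case True then show ?thesis using W0 by (simp add: s_def)
      next
        case False
        have np: "real n > 0" using False by simp
        have "s n u \<le> real n * (d (sc u x) (sc u y) + 2 * C0) / real n"
          unfolding s_def by (rule divide_right_mono[OF linb]) simp
        also have "\<dots> = d (sc u x) (sc u y) + 2 * C0" using np by simp
        finally have "s n u \<le> d (sc u x) (sc u y) + 2 * C0" .
        moreover have "s n u \<ge> 0" using dnn by (simp add: s_def)
        ultimately show ?thesis using b1 by (simp add: W_def)
      qed
    qed
    have "(\<lambda>n. integral\<^sup>L \<mu> (s n)) \<longlonglongrightarrow> integral\<^sup>L \<mu> f"
      by (rule integral_dominated_convergence[OF fm sm _ _ bound])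
         (auto simp: lim)
    moreover have "integral\<^sup>L \<mu> (s n) = d0 \<mu> sc d (sc (of_nat n) x) (sc (of_nat n) y) / real n" for n
      unfolding s_def d0_def comm by (rule integral_divide_zero)
    ultimately have "(\<lambda>n. d0 \<mu> sc d (sc (of_nat n) x) (sc (of_nat n) y) / real n) \<longlonglongrightarrow> integral\<^sup>L \<mu> f"
      by simp
    then show "asymp sc (d0 \<mu> sc d) x y = (\<integral>u. asymp sc d (sc u x) (sc u y) \<partial>\<mu>)"
      unfolding asymp_def f_def by (rule limI)
  qed
qed

end
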